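(* Consider the single-asset setting of the context. (i) For $t\in[0,T)$, $C(t)$ is strictly increasing in $\Lambda$ and strictly increasing in $\alpha\Sigma$. (ii) Let $t\in[0,T)$ and $x>0$ be fixed. Then $\xi^*(t,x)$ is strictly decreasing in $\Lambda$; consequently $\tilde X(t)$ is strictly increasing in $\Lambda$ for $t\in(0,T)$. (iii) Let $t\in[0,T)$ and $x>0$ be fixed. Then $\xi^*(t,x)$ is strictly increasing in $\alpha\Sigma$; consequently $\tilde X(t)$ is strictly decreasing in $\alpha\Sigma$ for $t\in(0,T)$. (In each statement the remaining parameters are held fixed.)
   Context: Single-asset setting: $T>0$, price impact $\Lambda>0$, variance $\Sigma\ge0$, risk aversion $\alpha\ge0$, dark pool intensity $\theta\ge0$. Let $\tilde\theta:=\sqrt{\theta^2+4\alpha\Sigma/\Lambda}$ and for $t\in[0,T)$ $$C(t)=\frac{\Lambda\tilde\theta}{2}\coth\Big(\frac{\tilde\theta}{2}(T-t)\Big)-\frac{\Lambda\theta}{2}\ \text{ if }\theta>0\text{ or }\alpha\Sigma>0,\qquad C(t)=\frac{\Lambda}{T-t}\ \text{ otherwise};$$ $C(t)x^2$ is the value function of the optimal liquidation problem (expected impact costs $\Lambda\int\xi^2$ plus risk costs $\alpha\Sigma\int X^2$). The optimal exchange trading rate is $\xi^*(t,x)=C(t)x/\Lambda$, and with initial position $x$ at time $0$, $\tilde X(t):=x\exp\big(-\int_0^tC(s)/\Lambda\,ds\big)$ is the optimal trajectory before any dark pool execution. *)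

theory Defs
  imports "HOL-Analysis.Analysis"
begin

definition coth :: "real \<Rightarrow> real" where
  "coth y = cosh y / sinh y"

definition theta_tilde :: "real \<Rightarrow> real \<Rightarrow> real \<Rightarrow> real \<Rightarrow> real" where
  "theta_tilde \<Lambda> \<alpha> \<Sigma> \<theta> = sqrt (\<theta>^2 + 4 * \<alpha> * \<Sigma> / \<Lambda>)"

definition C :: "real \<Rightarrow> real \<Rightarrow> real \<Rightarrow> real \<Rightarrow> real \<Rightarrow> real \<Rightarrow> real" where
  "C \<Lambda> \<alpha> \<Sigma> \<theta> T t =
     (if \<theta> > 0 \<or> \<alpha> * \<Sigma> > 0
      then \<Lambda> * theta_tilde \<Lambda> \<alpha> \<Sigma> \<theta> / 2 * coth (theta_tilde \<Lambda> \<alpha> \<Sigma> \<theta> / 2 * (T - t)) - \<Lambda> * \<theta> / 2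
      else \<Lambda> / (T - t))"

definition xi_star :: "real \<Rightarrow> real \<Rightarrow> real \<Rightarrow> real \<Rightarrow> real \<Rightarrow> real \<Rightarrow> real \<Rightarrow> real" where
  "xi_star \<Lambda> \<alpha> \<Sigma> \<theta> T t x = C \<Lambda> \<alpha> \<Sigma> \<theta> T t * x / \<Lambda>"

definition X_tilde :: "real \<Rightarrow> real \<Rightarrow> real \<Rightarrow> real \<Rightarrow> real \<Rightarrow> real \<Rightarrow> real \<Rightarrow> real" where
  "X_tilde \<Lambda> \<alpha> \<Sigma> \<theta> T x t = x * exp (- integral {0..t} (\<lambda>s. C \<Lambda> \<alpha> \<Sigma> \<theta> T s / \<Lambda>))"

end

theory Submission
  imports Defs
begin



lemma cosh_gt1: "(z::real) > 0 \<Longrightarrow> cosh z > 1"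
proof -
  assume z: "z > 0"
  have d: "\<And>x. DERIV cosh x :> sinh x" by (auto intro!: derivative_eq_intros)
  from MVT2[of 0 z cosh sinh, OF z d] obtain w where "0 < w" "w < z" "cosh z - cosh 0 = (z - 0) * sinh w"
    by auto
  moreover have "z * sinh w > 0" using z \<open>0<w\<close> by simp
  ultimately show ?thesis by (simp only: cosh_0 sinh_0 diff_zero mult_zero_left)
qed

lemma sinh_gt: "(y::real) > 0 \<Longrightarrow> y < sinh y"
proof -
  assume y: "y > 0"
  have d: "\<And>x. DERIV (\<lambda>x. sinh x - x) x :> cosh x - 1" by (auto intro!: derivative_eq_intros)
  from MVT2[of 0 y "\<lambda>x. sinh x - x" "\<lambda>x. cosh x - 1", OF y d] obtain w where
    "0 < w" "w < y" "(sinh y - y) - (sinh 0 - 0) = (y - 0) * (cosh w - 1)"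
    by auto
  moreover have "y * (cosh w - 1) > 0" using cosh_gt1[OF \<open>0<w\<close>] y by simp
  ultimately show ?thesis by (simp only: cosh_0 sinh_0 diff_zero mult_zero_left)
qed

lemma ycosh_gt: "(y::real) > 0 \<Longrightarrow> sinh y < y * cosh y"
proof -
  assume y: "y > 0"
  have d: "\<And>x. DERIV (\<lambda>x. x * cosh x - sinh x) x :> x * sinh x" by (auto intro!: derivative_eq_intros)
  from MVT2[of 0 y "\<lambda>x. x * cosh x - sinh x" "\<lambda>x. x * sinh x", OF y d] obtain w where
    "0 < w" "w < y" "(y * cosh y - sinh y) - (0 * cosh 0 - sinh 0) = (y - 0) * (w * sinh w)"
    by auto
  moreover have "y * (w * sinh w) > 0" using \<open>0<w\<close> y by simp
  ultimately show ?thesis by (simp only: cosh_0 sinh_0 diff_zero mult_zero_left)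
qed

lemma ycoth_gt1: "(y::real) > 0 \<Longrightarrow> 1 < y * coth y"
  using ycosh_gt[of y] by (simp add: coth_def field_simps)

lemma ycoth_mono: assumes "0 < (y1::real)" "y1 < y2" shows "y1 * coth y1 < y2 * coth y2"
proof -
  define D where "D = (\<lambda>x::real. ((cosh x + x * sinh x) * sinh x - x * cosh x * cosh x) / (sinh x * sinh x))"
  have der: "DERIV (\<lambda>x. x * cosh x / sinh x) x :> D x"
    if "y1 \<le> x" for x
  proof -
    have "x > 0" using that assms by simp
    hence nz: "sinh x \<noteq> 0" by simp
    show ?thesis unfolding D_def
      using nz \<open>x > 0\<close> by (auto intro!: derivative_eq_intros simp: algebra_simps)
  qed
  from MVT2[of y1 y2 "\<lambda>x. x * cosh x / sinh x" D, OF assms(2) der]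
  obtain w where w: "y1 < w" "w < y2"
    "y2 * cosh y2 / sinh y2 - y1 * cosh y1 / sinh y1 = (y2 - y1) * D w"
    by auto
  have "w > 0" using w assms by simp
  have "sinh (2*w) / 2 > w" using sinh_gt[of "2*w"] \<open>w>0\<close> by simp
  hence "sinh w * cosh w - w > 0" by (simp add: sinh_double)
  moreover have num: "(cosh w + w * sinh w) * sinh w - w * cosh w * cosh w = sinh w * cosh w - w * (cosh w ^ 2 - sinh w ^ 2)"
    by (simp add: algebra_simps power2_eq_square)
  moreover have "sinh w * sinh w > 0" using \<open>w>0\<close> by simp
  ultimately have "D w > 0" unfolding D_def by (simp add: hyperbolic_pythagoras)
  hence "(y2 - y1) * D w > 0" using assms by simp
  with w(3) show ?thesis by (simp add: coth_def)
qed



definition psi :: "real \<Rightarrow> real \<Rightarrow> real" where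
  "psi \<tau> s = (if s = 0 then 2 / \<tau> else s * coth (s / 2 * \<tau>))"

lemma psi_mono: assumes "\<tau> > 0" "0 \<le> s1" "s1 < s2" shows "psi \<tau> s1 < psi \<tau> s2"
proof (cases "s1 = 0")
  case True
  have "1 < (s2/2*\<tau>) * coth (s2/2*\<tau>)" using assms by (intro ycoth_gt1) simp
  hence "2 < s2 * coth (s2/2*\<tau>) * \<tau>" by (simp add: field_simps)
  hence "2/\<tau> < s2 * coth (s2/2*\<tau>)" using assms by (simp add: pos_divide_less_eq)
  thus ?thesis using True assms by (simp add: psi_def)
next
  case False
  have "(s1/2*\<tau>) * coth (s1/2*\<tau>) < (s2/2*\<tau>) * coth (s2/2*\<tau>)"
    using assms False by (intro ycoth_mono) (auto simp: mult_strict_right_mono)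
  hence "2/\<tau> * ((s1/2*\<tau>) * coth (s1/2*\<tau>)) < 2/\<tau> * ((s2/2*\<tau>) * coth (s2/2*\<tau>))"
    using assms by simp
  thus ?thesis using assms False by (simp add: psi_def field_simps)
qed

lemma tt_pos_iff:
  assumes "\<Lambda> > 0" "\<alpha> \<ge> 0" "\<Sigma> \<ge> 0" "\<theta> \<ge> 0"
  shows "theta_tilde \<Lambda> \<alpha> \<Sigma> \<theta> > 0 \<longleftrightarrow> (\<theta> > 0 \<or> \<alpha> * \<Sigma> > 0)"
proof -
  have "0 \<le> 4 * \<alpha> * \<Sigma> / \<Lambda>" using assms by simp
  moreover have "4 * \<alpha> * \<Sigma> / \<Lambda> > 0 \<longleftrightarrow> \<alpha> * \<Sigma> > 0" using assms
    by (simp add: zero_less_divide_iff mult.commute)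
  moreover have "\<theta>^2 > 0 \<longleftrightarrow> \<theta> \<noteq> 0" by simp
  moreover have "\<theta> \<noteq> 0 \<longleftrightarrow> \<theta> > 0" using assms by linarith
  moreover have "\<theta>^2 \<ge> 0" by simp
  ultimately show ?thesis unfolding theta_tilde_def by (smt (verit) real_sqrt_gt_zero real_sqrt_zero)
qed

lemma tt_nonneg: "\<Lambda> > 0 \<Longrightarrow> \<alpha> \<ge> 0 \<Longrightarrow> \<Sigma> \<ge> 0 \<Longrightarrow> theta_tilde \<Lambda> \<alpha> \<Sigma> \<theta> \<ge> 0"
  by (simp add: theta_tilde_def)

lemma C_form:
  assumes "\<Lambda> > 0" "\<alpha> \<ge> 0" "\<Sigma> \<ge> 0" "\<theta> \<ge> 0" "t < T"
  shows "C \<Lambda> \<alpha> \<Sigma> \<theta> T t / \<Lambda> = (psi (T - t) (theta_tilde \<Lambda> \<alpha> \<Sigma> \<theta>) - \<theta>) / 2"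
proof (cases "\<theta> > 0 \<or> \<alpha> * \<Sigma> > 0")
  case True
  hence "theta_tilde \<Lambda> \<alpha> \<Sigma> \<theta> > 0" using tt_pos_iff assms by blast
  then show ?thesis using True assms by (simp add: C_def psi_def field_simps)
next
  case False
  hence "\<theta> = 0" "\<alpha> * \<Sigma> = 0" using assms by (auto simp: zero_less_mult_iff)
  hence "theta_tilde \<Lambda> \<alpha> \<Sigma> \<theta> = 0" by (simp add: theta_tilde_def)
  then show ?thesis using False assms \<open>\<theta> = 0\<close> by (simp add: C_def psi_def field_simps)
qed

lemma tt_mono_L:
  assumes "0 < L1" "L1 < L2" "\<alpha> * \<Sigma> > 0"
  shows "theta_tilde L2 \<alpha> \<Sigma> \<theta> < theta_tilde L1 \<alpha> \<Sigma> \<theta>"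
proof -
  have "4 * (\<alpha> * \<Sigma>) / L2 < 4 * (\<alpha> * \<Sigma>) / L1" using assms
    by (intro divide_strict_left_mono) auto
  thus ?thesis by (simp add: theta_tilde_def mult.assoc)
qed

lemma tt_mono_L_le:
  assumes "0 < L1" "L1 \<le> L2" "\<alpha> * \<Sigma> \<ge> 0"
  shows "theta_tilde L2 \<alpha> \<Sigma> \<theta> \<le> theta_tilde L1 \<alpha> \<Sigma> \<theta>"
proof -
  have "4 * (\<alpha> * \<Sigma>) / L2 \<le> 4 * (\<alpha> * \<Sigma>) / L1" using assms
    by (intro divide_left_mono) auto
  thus ?thesis by (simp add: theta_tilde_def mult.assoc)
qed

lemma tt_mono_a:
  assumes "0 < L" "\<alpha>1 * \<Sigma>1 < \<alpha>2 * \<Sigma>2"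
  shows "theta_tilde L \<alpha>1 \<Sigma>1 \<theta> < theta_tilde L \<alpha>2 \<Sigma>2 \<theta>"
proof -
  have "4 * (\<alpha>1 * \<Sigma>1) / L < 4 * (\<alpha>2 * \<Sigma>2) / L" using assms
    by (intro divide_strict_right_mono) auto
  thus ?thesis by (simp add: theta_tilde_def mult.assoc)
qed

lemma CL_mono_L:
  assumes "0 < L1" "L1 < L2" "\<alpha> \<ge> 0" "\<Sigma> \<ge> 0" "\<alpha> * \<Sigma> > 0" "\<theta> \<ge> 0" "t < T"
  shows "C L2 \<alpha> \<Sigma> \<theta> T t / L2 < C L1 \<alpha> \<Sigma> \<theta> T t / L1"
proof -
  have e1: "C L1 \<alpha> \<Sigma> \<theta> T t / L1 = (psi (T - t) (theta_tilde L1 \<alpha> \<Sigma> \<theta>) - \<theta>) / 2"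
    by (rule C_form) (use assms in auto)
  have e2: "C L2 \<alpha> \<Sigma> \<theta> T t / L2 = (psi (T - t) (theta_tilde L2 \<alpha> \<Sigma> \<theta>) - \<theta>) / 2"
    by (rule C_form) (use assms in auto)
  have "psi (T - t) (theta_tilde L2 \<alpha> \<Sigma> \<theta>) < psi (T - t) (theta_tilde L1 \<alpha> \<Sigma> \<theta>)"
    using assms tt_mono_L[of L1 L2 \<alpha> \<Sigma> \<theta>] tt_nonneg[of L2 \<alpha> \<Sigma> \<theta>]
    by (intro psi_mono) auto
  thus ?thesis unfolding e1 e2 by simp
qed

lemma CL_mono_a:
  assumes "0 < L" "\<alpha>1 \<ge> 0" "\<Sigma>1 \<ge> 0" "\<alpha>2 \<ge> 0" "\<Sigma>2 \<ge> 0" "\<alpha>1 * \<Sigma>1 < \<alpha>2 * \<Sigma>2" "\<theta> \<ge> 0" "t < T"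
  shows "C L \<alpha>1 \<Sigma>1 \<theta> T t / L < C L \<alpha>2 \<Sigma>2 \<theta> T t / L"
proof -
  have e1: "C L \<alpha>1 \<Sigma>1 \<theta> T t / L = (psi (T - t) (theta_tilde L \<alpha>1 \<Sigma>1 \<theta>) - \<theta>) / 2"
    by (rule C_form) (use assms in auto)
  have e2: "C L \<alpha>2 \<Sigma>2 \<theta> T t / L = (psi (T - t) (theta_tilde L \<alpha>2 \<Sigma>2 \<theta>) - \<theta>) / 2"
    by (rule C_form) (use assms in auto)
  have "psi (T - t) (theta_tilde L \<alpha>1 \<Sigma>1 \<theta>) < psi (T - t) (theta_tilde L \<alpha>2 \<Sigma>2 \<theta>)"
    using assms tt_mono_a[of L \<alpha>1 \<Sigma>1 \<alpha>2 \<Sigma>2 \<theta>] tt_nonneg[of L \<alpha>1 \<Sigma>1 \<theta>]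
    by (intro psi_mono) auto
  thus ?thesis unfolding e1 e2 by simp
qed

lemma C_mono_a:
  assumes "0 < L" "\<alpha>1 \<ge> 0" "\<Sigma>1 \<ge> 0" "\<alpha>2 \<ge> 0" "\<Sigma>2 \<ge> 0" "\<alpha>1 * \<Sigma>1 < \<alpha>2 * \<Sigma>2" "\<theta> \<ge> 0" "t < T"
  shows "C L \<alpha>1 \<Sigma>1 \<theta> T t < C L \<alpha>2 \<Sigma>2 \<theta> T t"
  using CL_mono_a[OF assms] assms(1) by (simp add: divide_less_cancel)

lemma coth_gt1: "(y::real) > 0 \<Longrightarrow> coth y > 1"
  using cosh_minus_sinh[of y] by (simp add: coth_def field_simps)

lemma coth_antimono: assumes "0 < (y1::real)" "y1 \<le> y2" shows "coth y2 \<le> coth y1"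
proof -
  have "sinh (y2 - y1) \<ge> 0" using assms by simp
  hence "cosh y2 * sinh y1 \<le> cosh y1 * sinh y2" by (simp add: sinh_diff mult.commute)
  moreover have "sinh y1 > 0" "sinh y2 > 0" using assms by auto
  ultimately show ?thesis by (simp add: coth_def field_simps)
qed

lemma C_mono_L:
  assumes "0 < L1" "L1 < L2" "\<alpha> \<ge> 0" "\<Sigma> \<ge> 0" "\<theta> \<ge> 0" "t < T"
  shows "C L1 \<alpha> \<Sigma> \<theta> T t < C L2 \<alpha> \<Sigma> \<theta> T t"
proof (cases "\<theta> > 0 \<or> \<alpha> * \<Sigma> > 0")
  case False
  thus ?thesis using assms by (simp add: C_def divide_strict_right_mono)
next
  case True
  define a where "a = \<alpha> * \<Sigma>"
  have a0: "a \<ge> 0" using assms by (simp add: a_def)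
  define \<tau> where "\<tau> = T - t"
  have tau: "\<tau> > 0" using assms by (simp add: \<tau>_def)
  have form: "C L \<alpha> \<Sigma> \<theta> T t = 2 * a / (theta_tilde L \<alpha> \<Sigma> \<theta> + \<theta>)
      + L * theta_tilde L \<alpha> \<Sigma> \<theta> / 2 * (coth (theta_tilde L \<alpha> \<Sigma> \<theta> / 2 * \<tau>) - 1)"
    if L: "L > 0" for L
  proof -
    define s where "s = theta_tilde L \<alpha> \<Sigma> \<theta>"
    have sp: "s > 0" using tt_pos_iff[of L \<alpha> \<Sigma> \<theta>] True L assms by (simp add: s_def)
    have ssq: "s^2 = \<theta>^2 + 4 * a / L" using assms L
      by (simp add: s_def theta_tilde_def a_def)
    have "s + \<theta> > 0" using sp assms by simp
    have "2 * a / (s + \<theta>) = L * (s - \<theta>) / 2"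
    proof -
      have "L * (s - \<theta>) / 2 * (s + \<theta>) = L * (s^2 - \<theta>^2) / 2" by (simp add: algebra_simps power2_eq_square)
      also have "\<dots> = 2 * a" using ssq L by simp
      finally show ?thesis using \<open>s + \<theta> > 0\<close> by (simp add: field_simps)
    qed
    note eq = this
    have c: "C L \<alpha> \<Sigma> \<theta> T t = L * s / 2 * coth (s / 2 * \<tau>) - L * \<theta> / 2"
      by (simp only: C_def if_P[OF True] s_def \<tau>_def)
    have ar: "L * s / 2 * X - L * \<theta> / 2 = L * (s - \<theta>) / 2 + L * s / 2 * (X - 1)" for X
      by (simp add: field_simps)
    show ?thesis unfolding s_def[symmetric] c ar[of "coth (s / 2 * \<tau>)"] eq by (rule refl)
  qed
  define s1 where "s1 = theta_tilde L1 \<alpha> \<Sigma> \<theta>"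
  define s2 where "s2 = theta_tilde L2 \<alpha> \<Sigma> \<theta>"
  have s1p: "s1 > 0" using tt_pos_iff[of L1 \<alpha> \<Sigma> \<theta>] True assms by (simp add: s1_def)
  have s2p: "s2 > 0" using tt_pos_iff[of L2 \<alpha> \<Sigma> \<theta>] True assms by (simp add: s2_def)
  have s21: "s2 \<le> s1" unfolding s1_def s2_def using assms by (intro tt_mono_L_le) auto
  have t1: "2 * a / (s1 + \<theta>) \<le> 2 * a / (s2 + \<theta>)"
    using a0 s21 s2p assms by (intro divide_left_mono) auto
  have Ls: "L1 * s1 < L2 * s2"
  proof -
    have e: "(L * theta_tilde L \<alpha> \<Sigma> \<theta>)^2 = L^2 * \<theta>^2 + 4 * a * L" if "L > 0" for L
      using that assms by (simp add: theta_tilde_def power_mult_distrib a_def field_simps power2_eq_square)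
    have "L1^2 * \<theta>^2 + 4 * a * L1 < L2^2 * \<theta>^2 + 4 * a * L2"
    proof (cases "\<theta> > 0")
      case True
      have "L1^2 < L2^2" using assms by (simp add: power_strict_mono)
      hence "L1^2 * \<theta>^2 < L2^2 * \<theta>^2" using True by simp
      moreover have "4 * a * L1 \<le> 4 * a * L2" using a0 assms by (simp add: mult_left_mono)
      ultimately show ?thesis by simp
    next
      case False
      hence "a > 0" using \<open>\<theta> > 0 \<or> \<alpha> * \<Sigma> > 0\<close> by (simp add: a_def)
      have "L1^2 * \<theta>^2 \<le> L2^2 * \<theta>^2" using assms by (intro mult_right_mono power_mono) auto
      moreover have "4 * a * L1 < 4 * a * L2" using \<open>a>0\<close> assms by simp
      ultimately show ?thesis by simp
    qed
    hence "(L1 * s1)^2 < (L2 * s2)^2" using e[of L1] e[of L2] assms by (simp add: s1_def s2_def)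
    thus ?thesis using s2p assms by (simp add: power_less_imp_less_base)
  qed
  have c1: "coth (s1 / 2 * \<tau>) - 1 > 0" using coth_gt1[of "s1/2*\<tau>"] s1p tau by simp
  have c12: "coth (s1 / 2 * \<tau>) \<le> coth (s2 / 2 * \<tau>)"
    using s2p s21 tau by (intro coth_antimono) (auto simp: mult_right_mono)
  have t2: "L1 * s1 / 2 * (coth (s1 / 2 * \<tau>) - 1) < L2 * s2 / 2 * (coth (s2 / 2 * \<tau>) - 1)"
  proof -
    have "L1 * s1 * (coth (s1 / 2 * \<tau>) - 1) < L2 * s2 * (coth (s1 / 2 * \<tau>) - 1)"
      using Ls c1 by simp
    also have "\<dots> \<le> L2 * s2 * (coth (s2 / 2 * \<tau>) - 1)"
      using c12 s2p assms by (intro mult_left_mono) auto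
    finally show ?thesis by simp
  qed
  have f1: "C L1 \<alpha> \<Sigma> \<theta> T t = 2 * a / (s1 + \<theta>) + L1 * s1 / 2 * (coth (s1 / 2 * \<tau>) - 1)"
    unfolding s1_def by (rule form) (use assms in simp)
  have f2: "C L2 \<alpha> \<Sigma> \<theta> T t = 2 * a / (s2 + \<theta>) + L2 * s2 / 2 * (coth (s2 / 2 * \<tau>) - 1)"
    unfolding s2_def by (rule form) (use assms in simp)
  show ?thesis unfolding f1 f2 using t1 t2 by linarith
qed



lemma C_cont:
  assumes "\<Lambda> > 0" "\<alpha> \<ge> 0" "\<Sigma> \<ge> 0" "\<theta> \<ge> 0" "t < T"
  shows "continuous_on {0..t} (\<lambda>s. C \<Lambda> \<alpha> \<Sigma> \<theta> T s / \<Lambda>)"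
proof (cases "\<theta> > 0 \<or> \<alpha> * \<Sigma> > 0")
  case True
  hence tp: "theta_tilde \<Lambda> \<alpha> \<Sigma> \<theta> > 0" using tt_pos_iff assms by blast
  have nz: "\<forall>s\<in>{0..t}. sinh (theta_tilde \<Lambda> \<alpha> \<Sigma> \<theta> / 2 * (T - s)) \<noteq> 0"
    using tp assms by auto
  define tt where "tt = theta_tilde \<Lambda> \<alpha> \<Sigma> \<theta>"
  have eq: "(\<lambda>s. C \<Lambda> \<alpha> \<Sigma> \<theta> T s / \<Lambda>) =
     (\<lambda>s. (\<Lambda> * tt / 2 * (cosh (tt / 2 * (T - s)) / sinh (tt / 2 * (T - s))) - \<Lambda> * \<theta> / 2) / \<Lambda>)"
    by (rule ext) (simp only: C_def coth_def tt_def if_P[OF True])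
  show ?thesis unfolding eq
    by (intro continuous_intros) (use nz assms(1) in \<open>auto simp: tt_def\<close>)
next
  case False
  have nz: "\<forall>s\<in>{0..t}. T - s \<noteq> 0" using assms by auto
  have eq: "(\<lambda>s. C \<Lambda> \<alpha> \<Sigma> \<theta> T s / \<Lambda>) = (\<lambda>s. (\<Lambda> / (T - s)) / \<Lambda>)"
    by (rule ext) (simp only: C_def if_not_P[OF False])
  show ?thesis unfolding eq
    by (intro continuous_intros) (use nz assms(1) in auto)
qed

lemma X_compare:
  assumes "\<Lambda>1 > 0" "\<alpha>1 \<ge> 0" "\<Sigma>1 \<ge> 0" "\<Lambda>2 > 0" "\<alpha>2 \<ge> 0" "\<Sigma>2 \<ge> 0" "\<theta> \<ge> 0"
    "0 < t" "t < T" "x > 0"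
    "\<And>s. 0 \<le> s \<Longrightarrow> s < T \<Longrightarrow> C \<Lambda>2 \<alpha>2 \<Sigma>2 \<theta> T s / \<Lambda>2 < C \<Lambda>1 \<alpha>1 \<Sigma>1 \<theta> T s / \<Lambda>1"
  shows "X_tilde \<Lambda>1 \<alpha>1 \<Sigma>1 \<theta> T x t < X_tilde \<Lambda>2 \<alpha>2 \<Sigma>2 \<theta> T x t"
proof -
  have "integral {0..t} (\<lambda>s. C \<Lambda>2 \<alpha>2 \<Sigma>2 \<theta> T s / \<Lambda>2) < integral {0..t} (\<lambda>s. C \<Lambda>1 \<alpha>1 \<Sigma>1 \<theta> T s / \<Lambda>1)"
    using assms by (intro integral_less_real C_cont) auto
  thus ?thesis using assms(10) unfolding X_tilde_def by simp
qed


theorem proposition4p2: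
  fixes T \<theta> :: real
  assumes hT: "T > 0" and h\<theta>: "\<theta> \<ge> 0"
  shows
   "(\<forall>t \<Lambda>1 \<Lambda>2 \<alpha> \<Sigma>. 0 \<le> t \<and> t < T \<and> 0 < \<Lambda>1 \<and> \<Lambda>1 < \<Lambda>2 \<and> 0 \<le> \<alpha> \<and> 0 \<le> \<Sigma> \<longrightarrow>
        C \<Lambda>1 \<alpha> \<Sigma> \<theta> T t < C \<Lambda>2 \<alpha> \<Sigma> \<theta> T t)
  \<and> (\<forall>t \<Lambda> \<alpha>1 \<Sigma>1 \<alpha>2 \<Sigma>2. 0 \<le> t \<and> t < T \<and> 0 < \<Lambda> \<and> 0 \<le> \<alpha>1 \<and> 0 \<le> \<Sigma>1 \<and> 0 \<le> \<alpha>2 \<and> 0 \<le> \<Sigma>2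
        \<and> \<alpha>1 * \<Sigma>1 < \<alpha>2 * \<Sigma>2 \<longrightarrow>
        C \<Lambda> \<alpha>1 \<Sigma>1 \<theta> T t < C \<Lambda> \<alpha>2 \<Sigma>2 \<theta> T t)
  \<and> (\<forall>t x \<Lambda>1 \<Lambda>2 \<alpha> \<Sigma>. 0 \<le> t \<and> t < T \<and> 0 < x \<and> 0 < \<Lambda>1 \<and> \<Lambda>1 < \<Lambda>2 \<and> 0 \<le> \<alpha> \<and> 0 \<le> \<Sigma>
        \<and> 0 < \<alpha> * \<Sigma> \<longrightarrow>
        xi_star \<Lambda>2 \<alpha> \<Sigma> \<theta> T t x < xi_star \<Lambda>1 \<alpha> \<Sigma> \<theta> T t x)
  \<and> (\<forall>t x \<Lambda>1 \<Lambda>2 \<alpha> \<Sigma>. 0 < t \<and> t < T \<and> 0 < x \<and> 0 < \<Lambda>1 \<and> \<Lambda>1 < \<Lambda>2 \<and> 0 \<le> \<alpha> \<and> 0 \<le> \<Sigma>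
        \<and> 0 < \<alpha> * \<Sigma> \<longrightarrow>
        X_tilde \<Lambda>1 \<alpha> \<Sigma> \<theta> T x t < X_tilde \<Lambda>2 \<alpha> \<Sigma> \<theta> T x t)
  \<and> (\<forall>t x \<Lambda> \<alpha>1 \<Sigma>1 \<alpha>2 \<Sigma>2. 0 \<le> t \<and> t < T \<and> 0 < x \<and> 0 < \<Lambda> \<and> 0 \<le> \<alpha>1 \<and> 0 \<le> \<Sigma>1
        \<and> 0 \<le> \<alpha>2 \<and> 0 \<le> \<Sigma>2 \<and> \<alpha>1 * \<Sigma>1 < \<alpha>2 * \<Sigma>2 \<longrightarrow>
        xi_star \<Lambda> \<alpha>1 \<Sigma>1 \<theta> T t x < xi_star \<Lambda> \<alpha>2 \<Sigma>2 \<theta> T t x)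
  \<and> (\<forall>t x \<Lambda> \<alpha>1 \<Sigma>1 \<alpha>2 \<Sigma>2. 0 < t \<and> t < T \<and> 0 < x \<and> 0 < \<Lambda> \<and> 0 \<le> \<alpha>1 \<and> 0 \<le> \<Sigma>1
        \<and> 0 \<le> \<alpha>2 \<and> 0 \<le> \<Sigma>2 \<and> \<alpha>1 * \<Sigma>1 < \<alpha>2 * \<Sigma>2 \<longrightarrow>
        X_tilde \<Lambda> \<alpha>2 \<Sigma>2 \<theta> T x t < X_tilde \<Lambda> \<alpha>1 \<Sigma>1 \<theta> T x t)"
proof (intro conjI allI impI)
  fix t L1 L2 \<alpha> \<Sigma> :: real
  assume "0 \<le> t \<and> t < T \<and> 0 < L1 \<and> L1 < L2 \<and> 0 \<le> \<alpha> \<and> 0 \<le> \<Sigma>"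
  thus "C L1 \<alpha> \<Sigma> \<theta> T t < C L2 \<alpha> \<Sigma> \<theta> T t" using C_mono_L h\<theta> by blast
next
  fix t L \<alpha>1 \<Sigma>1 \<alpha>2 \<Sigma>2 :: real
  assume "0 \<le> t \<and> t < T \<and> 0 < L \<and> 0 \<le> \<alpha>1 \<and> 0 \<le> \<Sigma>1 \<and> 0 \<le> \<alpha>2 \<and> 0 \<le> \<Sigma>2 \<and> \<alpha>1 * \<Sigma>1 < \<alpha>2 * \<Sigma>2"
  thus "C L \<alpha>1 \<Sigma>1 \<theta> T t < C L \<alpha>2 \<Sigma>2 \<theta> T t" using C_mono_a h\<theta> by blast
next
  fix t x L1 L2 \<alpha> \<Sigma> :: real
  assume a: "0 \<le> t \<and> t < T \<and> 0 < x \<and> 0 < L1 \<and> L1 < L2 \<and> 0 \<le> \<alpha> \<and> 0 \<le> \<Sigma> \<and> 0 < \<alpha> * \<Sigma>"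
  hence "C L2 \<alpha> \<Sigma> \<theta> T t / L2 < C L1 \<alpha> \<Sigma> \<theta> T t / L1" using CL_mono_L h\<theta> by blast
  hence "C L2 \<alpha> \<Sigma> \<theta> T t / L2 * x < C L1 \<alpha> \<Sigma> \<theta> T t / L1 * x"
    by (rule mult_strict_right_mono) (use a in blast)
  thus "xi_star L2 \<alpha> \<Sigma> \<theta> T t x < xi_star L1 \<alpha> \<Sigma> \<theta> T t x" by (simp add: xi_star_def)
next
  fix t x L1 L2 \<alpha> \<Sigma> :: real
  assume a: "0 < t \<and> t < T \<and> 0 < x \<and> 0 < L1 \<and> L1 < L2 \<and> 0 \<le> \<alpha> \<and> 0 \<le> \<Sigma> \<and> 0 < \<alpha> * \<Sigma>"
  have h: "C L2 \<alpha> \<Sigma> \<theta> T s / L2 < C L1 \<alpha> \<Sigma> \<theta> T s / L1" if "0 \<le> s" "s < T" for s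
    by (rule CL_mono_L) (use a h\<theta> that in auto)
  show "X_tilde L1 \<alpha> \<Sigma> \<theta> T x t < X_tilde L2 \<alpha> \<Sigma> \<theta> T x t"
    by (rule X_compare[OF _ _ _ _ _ _ _ _ _ _ h]) (use a h\<theta> in auto)
next
  fix t x L \<alpha>1 \<Sigma>1 \<alpha>2 \<Sigma>2 :: real
  assume a: "0 \<le> t \<and> t < T \<and> 0 < x \<and> 0 < L \<and> 0 \<le> \<alpha>1 \<and> 0 \<le> \<Sigma>1 \<and> 0 \<le> \<alpha>2 \<and> 0 \<le> \<Sigma>2 \<and> \<alpha>1 * \<Sigma>1 < \<alpha>2 * \<Sigma>2"
  hence "C L \<alpha>1 \<Sigma>1 \<theta> T t / L < C L \<alpha>2 \<Sigma>2 \<theta> T t / L" using CL_mono_a h\<theta> by blast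
  hence "C L \<alpha>1 \<Sigma>1 \<theta> T t / L * x < C L \<alpha>2 \<Sigma>2 \<theta> T t / L * x"
    by (rule mult_strict_right_mono) (use a in blast)
  thus "xi_star L \<alpha>1 \<Sigma>1 \<theta> T t x < xi_star L \<alpha>2 \<Sigma>2 \<theta> T t x" by (simp add: xi_star_def)
next
  fix t x L \<alpha>1 \<Sigma>1 \<alpha>2 \<Sigma>2 :: real
  assume a: "0 < t \<and> t < T \<and> 0 < x \<and> 0 < L \<and> 0 \<le> \<alpha>1 \<and> 0 \<le> \<Sigma>1 \<and> 0 \<le> \<alpha>2 \<and> 0 \<le> \<Sigma>2 \<and> \<alpha>1 * \<Sigma>1 < \<alpha>2 * \<Sigma>2"
  have h: "C L \<alpha>1 \<Sigma>1 \<theta> T s / L < C L \<alpha>2 \<Sigma>2 \<theta> T s / L" if "0 \<le> s" "s < T" for s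
    by (rule CL_mono_a) (use a h\<theta> that in auto)
  show "X_tilde L \<alpha>2 \<Sigma>2 \<theta> T x t < X_tilde L \<alpha>1 \<Sigma>1 \<theta> T x t"
    by (rule X_compare[OF _ _ _ _ _ _ _ _ _ _ h]) (use a h\<theta> in auto)
qed

end
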